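(* Let $G$ be a finite connected undirected graph with $m$ edges, unknown to the agents. Two agents start at the same node of $G$ and both execute the navigation table $T_{\mathrm{explo}}$ (described in the context) in the asynchronous model. Then the two agents traverse all edges of $G$ twice and then stop at the same node after exactly $2m$ rounds.
   Context: Model. A passage (port) is an endpoint of an edge at one of its nodes; $u\xrightarrow{e}v$ denotes the passage of edge $e=(u,v)$ at $u$. Each passage carries one marker from a finite alphabet; initially every passage has the default marker $\emptyset$ (unmarked). The graph is unlabelled; an agent at a node sees only the markers of the passages at that node and remembers only the passage by which it arrived. A move of an agent at node $u$ consists of: (S1) reading the markers at $u$ and either stopping or choosing a passage $p_u$ at $u$; (S2) possibly changing the marker of $p_u$; (S3) traversing the corresponding edge; (S4) arriving at $v$ through passage $p_v$ and reading the markers at $v$; (S5) possibly changing the marker of $p_v$. In the asynchronous model, at each round an adversary chooses one of the two agents, which performs a whole move (S1)–(S5). Navigation tables. A navigation table is an ordered list of rows $(p_u, p_u', p_v, p_v')$. An agent at $u$ takes the first row (in order) such that $u$ has a passage with marker $p_u$ (rows with the same $p_u$ are distinguished only after arrival, by the condition in column $p_v$); it picks such a passage, replaces its marker by $p_u'$, traverses the edge, and on arriving at $v$ replaces the marker of the arrival passage by the $p_v'$ of the row whose $p_v$ condition holds. A dash means "any marker / unchanged". If no row applies, the agent stops. A node is "discovered" if it has been visited before. Table $T_{\mathrm{explo}}$ (rows in priority order, markers B, D, E, F): (1) $p_u=$B, $p_u'=$D, $p_v=$ -, $p_v'=$D; (2) $p_u=\emptyset$, $p_u'=$E, $p_v=$E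 (the arrival passage at $v$ is marked E), $p_v'=$D; (3) $p_u=\emptyset$, $p_u'=$E, $v$ already discovered, $p_v'=$B; (4) $p_u=\emptyset$, $p_u'=$E, $v$ undiscovered, $p_v'=$F; (5) $p_u=$F, $p_u'=$D, $p_v=$ -, $p_v'=$D; (6) $p_u=$E, $p_u'=$D, $p_v=$ -, $p_v'=$D. *)

theory Defs
  imports Main
begin

datatype marker = Unm | MB | MD | ME | MF

(* Simple undirected graph: symmetric irreflexive relation Adj on V.
   The passage u --e--> v of edge e = {u,v} at u is the ordered pair (u,v). *)

record 'v config =
  marks   :: "'v \<times> 'v \<Rightarrow> marker"
  pos     :: "bool \<Rightarrow> 'v"
  visited :: "'v set"
  stopped :: "bool \<Rightarrow> bool"

definition has_passage :: "('v \<times> 'v) set \<Rightarrow> ('v \<times> 'v \<Rightarrow> marker) \<Rightarrow> 'v \<Rightarrow> marker \<Rightarrow> bool" where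
  "has_passage Adj mk u x \<longleftrightarrow> (\<exists>v. (u, v) \<in> Adj \<and> mk (u, v) = x)"

(* The p_u column of the first applicable row of T_explo (rows in priority order:
   B (row 1), unmarked (rows 2-4), F (row 5), E (row 6)); None = no row applies. *)
definition active_marker :: "('v \<times> 'v) set \<Rightarrow> ('v \<times> 'v \<Rightarrow> marker) \<Rightarrow> 'v \<Rightarrow> marker option" where
  "active_marker Adj mk u =
     (if has_passage Adj mk u MB then Some MB
      else if has_passage Adj mk u Unm then Some Unm
      else if has_passage Adj mk u MF then Some MF
      else if has_passage Adj mk u ME then Some ME
      else None)"

(* marker update (row 2: arrival passage marked E; row 3: v discovered; row 4: otherwise;
   rows 1, 5, 6: both ends set to D) of a move from u to v through passage (u,v) according to T_explo;
   vis is the set of nodes discovered before the move *)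
definition apply_row :: "('v \<times> 'v \<Rightarrow> marker) \<Rightarrow> 'v set \<Rightarrow> 'v \<Rightarrow> 'v \<Rightarrow> ('v \<times> 'v \<Rightarrow> marker)" where
  "apply_row mk vis u v =
     (if mk (u, v) = Unm then
        (mk((u, v) := ME))((v, u) :=
           (if mk (v, u) = ME then MD
            else if v \<in> vis then MB
            else MF))
      else (mk((u, v) := MD))((v, u) := MD))"

(* one round of the asynchronous model: the adversary activates a non-stopped agent i.
   Label Some (u,v): agent traverses the edge from u to v; label None: agent stops. *)
inductive step :: "('v \<times> 'v) set \<Rightarrow> 'v config \<Rightarrow> ('v \<times> 'v) option \<Rightarrow> 'v config \<Rightarrow> bool"
  for Adj where
  move: "\<not> stopped c i \<Longrightarrow> (pos c i, v) \<in> Adj \<Longrightarrow>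
         active_marker Adj (marks c) (pos c i) = Some (marks c (pos c i, v)) \<Longrightarrow>
         step Adj c (Some (pos c i, v))
           (c\<lparr>marks := apply_row (marks c) (visited c) (pos c i) v,
              pos := (pos c)(i := v),
              visited := insert v (visited c)\<rparr>)"
| halt: "\<not> stopped c i \<Longrightarrow> active_marker Adj (marks c) (pos c i) = None \<Longrightarrow>
         step Adj c None (c\<lparr>stopped := (stopped c)(i := True)\<rparr>)"

inductive exec :: "('v \<times> 'v) set \<Rightarrow> 'v config \<Rightarrow> ('v \<times> 'v) option list \<Rightarrow> 'v config \<Rightarrow> bool"
  for Adj where
  exec_nil: "exec Adj c [] c"
| exec_cons: "step Adj c l c' \<Longrightarrow> exec Adj c' ls c'' \<Longrightarrow> exec Adj c (l # ls) c''"

definition init_config :: "'v \<Rightarrow> 'v config" where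
  "init_config s = \<lparr>marks = (\<lambda>_. Unm), pos = (\<lambda>_. s), visited = {s}, stopped = (\<lambda>_. False)\<rparr>"

definition traversals :: "('v \<times> 'v) option list \<Rightarrow> ('v \<times> 'v) list" where
  "traversals ls = [e. Some e \<leftarrow> ls]"

definition uedges :: "('v \<times> 'v) set \<Rightarrow> 'v set set" where
  "uedges Adj = {{u, v} | u v. (u, v) \<in> Adj}"

definition times_traversed :: "('v \<times> 'v) option list \<Rightarrow> 'v set \<Rightarrow> nat" where
  "times_traversed ls e = length (filter (\<lambda>(u, v). {u, v} = e) (traversals ls))"

end

theory Submission
  imports Defs
begin


fun eo :: "'v \<Rightarrow> 'v list \<Rightarrow> ('v \<times> 'v) list" where
  "eo r [] = []"
| "eo r (x # xs) = (r, x) # eo x xs"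

definition opn :: "'v \<Rightarrow> (bool \<Rightarrow> 'v list) \<Rightarrow> 'v \<times> 'v \<Rightarrow> bool" where
  "opn r P e \<longleftrightarrow> (\<exists>k. e \<in> set (eo r (P k)))"

lemma eo_snoc: "eo r (xs @ [v]) = eo r xs @ [(last (r # xs), v)]"
  by (induction xs arbitrary: r) auto

lemma eo_Nil_iff: "eo r xs = [] \<longleftrightarrow> xs = []"
  by (cases xs) auto

lemma eo_src: "(a, b) \<in> set (eo r xs) \<Longrightarrow> a = r \<or> (\<exists>c. (c, a) \<in> set (eo r xs))"
  by (induction xs arbitrary: r) force+

lemma eo_last: "xs \<noteq> [] \<Longrightarrow> eo r xs = eo r (butlast xs) @ [(last (r # butlast xs), last xs)]"
  using eo_snoc[of r "butlast xs" "last xs"] by simp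

lemma has_passage_iff: "has_passage Adj mk u x \<longleftrightarrow> (\<exists>v. (u, v) \<in> Adj \<and> mk (u, v) = x)"
  by (simp add: has_passage_def)

lemma am_cases:
  assumes "active_marker Adj mk u = Some m"
  shows "(m = MB \<and> has_passage Adj mk u MB)
       \<or> (m = Unm \<and> \<not> has_passage Adj mk u MB)
       \<or> (m = MF \<and> \<not> has_passage Adj mk u MB \<and> \<not> has_passage Adj mk u Unm)
       \<or> (m = ME \<and> \<not> has_passage Adj mk u MB \<and> \<not> has_passage Adj mk u Unm \<and> \<not> has_passage Adj mk u MF)"
  using assms by (auto simp: active_marker_def split: if_splits)

lemma am_notD: "active_marker Adj mk u \<noteq> Some MD"
  by (auto simp: active_marker_def)

lemma am_None_iff: "active_marker Adj mk u = None \<longleftrightarrow> (\<forall>y. (u, y) \<in> Adj \<longrightarrow> mk (u, y) = MD)"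
proof -
  have "\<And>x::marker. x \<noteq> MB \<Longrightarrow> x \<noteq> Unm \<Longrightarrow> x \<noteq> MF \<Longrightarrow> x \<noteq> ME \<Longrightarrow> x = MD"
    by (case_tac x) auto
  then show ?thesis by (auto simp: active_marker_def has_passage_def)
qed

definition sinv :: "('v \<times> 'v) set \<Rightarrow> 'v config \<Rightarrow> 'v \<Rightarrow> (bool \<Rightarrow> 'v list) \<Rightarrow> bool" where
 "sinv Adj c r P \<longleftrightarrow>
   r \<in> visited c \<and>
   (\<forall>k. pos c k = last (r # P k)) \<and>
   (\<forall>k. distinct (eo r (P k))) \<and>
   (\<forall>k k' e. k \<noteq> k' \<longrightarrow> e \<in> set (eo r (P k)) \<longrightarrow> e \<notin> set (eo r (P k'))) \<and>
   (\<forall>a b. opn r P (a, b) \<longrightarrow> (a, b) \<in> Adj \<and> marks c (a, b) = ME \<and> marks c (b, a) \<in> {MF, MB}) \<and>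
   (\<forall>a b. (a, b) \<in> Adj \<longrightarrow> marks c (a, b) = ME \<longrightarrow> opn r P (a, b)) \<and>
   (\<forall>a b. (a, b) \<in> Adj \<longrightarrow> marks c (a, b) \<in> {MF, MB} \<longrightarrow> opn r P (b, a)) \<and>
   (\<forall>a b. (a, b) \<in> Adj \<longrightarrow> marks c (a, b) = Unm \<longrightarrow> marks c (b, a) = Unm) \<and>
   (\<forall>a b. (a, b) \<in> Adj \<longrightarrow> marks c (a, b) = MD \<longrightarrow> marks c (b, a) = MD) \<and>
   (\<forall>k a b. (a, b) \<in> set (butlast (eo r (P k))) \<longrightarrow> marks c (b, a) = MF) \<and>
   (\<forall>a x y. (a, x) \<in> Adj \<longrightarrow> (a, y) \<in> Adj \<longrightarrow> marks c (a, x) = MF \<longrightarrow> marks c (a, y) = MF \<longrightarrow> x = y) \<and>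
   (\<forall>x. (r, x) \<in> Adj \<longrightarrow> marks c (r, x) \<noteq> MF) \<and>
   (\<forall>x y. x \<in> visited c \<longrightarrow> (x, y) \<in> Adj \<longrightarrow> marks c (x, y) = Unm \<longrightarrow>
           x = r \<or> (\<exists>z. (x, z) \<in> Adj \<and> marks c (x, z) = MF)) \<and>
   (\<forall>a b. (a, b) \<in> Adj \<longrightarrow> marks c (a, b) \<noteq> Unm \<longrightarrow> a \<in> visited c \<and> b \<in> visited c) \<and>
   (\<forall>k. pos c k \<in> visited c) \<and>
   (\<forall>k. stopped c k \<longrightarrow> active_marker Adj (marks c) (pos c k) = None)"

lemma invD:
  assumes "sinv Adj c r P"
  shows "r \<in> visited c"
   "\<forall>k. pos c k = last (r # P k)"
   "\<forall>k. distinct (eo r (P k))"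
   "\<forall>k k' e. k \<noteq> k' \<longrightarrow> e \<in> set (eo r (P k)) \<longrightarrow> e \<notin> set (eo r (P k'))"
   "\<forall>a b. opn r P (a, b) \<longrightarrow> (a, b) \<in> Adj \<and> marks c (a, b) = ME \<and> marks c (b, a) \<in> {MF, MB}"
   "\<forall>a b. (a, b) \<in> Adj \<longrightarrow> marks c (a, b) = ME \<longrightarrow> opn r P (a, b)"
   "\<forall>a b. (a, b) \<in> Adj \<longrightarrow> marks c (a, b) \<in> {MF, MB} \<longrightarrow> opn r P (b, a)"
   "\<forall>a b. (a, b) \<in> Adj \<longrightarrow> marks c (a, b) = Unm \<longrightarrow> marks c (b, a) = Unm"
   "\<forall>a b. (a, b) \<in> Adj \<longrightarrow> marks c (a, b) = MD \<longrightarrow> marks c (b, a) = MD"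
   "\<forall>k a b. (a, b) \<in> set (butlast (eo r (P k))) \<longrightarrow> marks c (b, a) = MF"
   "\<forall>a x y. (a, x) \<in> Adj \<longrightarrow> (a, y) \<in> Adj \<longrightarrow> marks c (a, x) = MF \<longrightarrow> marks c (a, y) = MF \<longrightarrow> x = y"
   "\<forall>x. (r, x) \<in> Adj \<longrightarrow> marks c (r, x) \<noteq> MF"
   "\<forall>x y. x \<in> visited c \<longrightarrow> (x, y) \<in> Adj \<longrightarrow> marks c (x, y) = Unm \<longrightarrow>
           x = r \<or> (\<exists>z. (x, z) \<in> Adj \<and> marks c (x, z) = MF)"
   "\<forall>a b. (a, b) \<in> Adj \<longrightarrow> marks c (a, b) \<noteq> Unm \<longrightarrow> a \<in> visited c \<and> b \<in> visited c"
   "\<forall>k. pos c k \<in> visited c"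
   "\<forall>k. stopped c k \<longrightarrow> active_marker Adj (marks c) (pos c k) = None"
  apply ((insert assms[unfolded sinv_def], elim conjE, assumption))+
  done

lemma stopped_pres:
  assumes st: "\<forall>k. stopped c k \<longrightarrow> active_marker Adj mk (pos c k) = None"
    and nD: "mk (u, v) \<noteq> MD"
    and DD: "\<And>a b. (a, b) \<in> Adj \<Longrightarrow> mk (a, b) = MD \<Longrightarrow> mk (b, a) = MD"
    and uv: "(u, v) \<in> Adj" and sy: "sym Adj"
    and same: "\<And>p. p \<noteq> (u, v) \<Longrightarrow> p \<noteq> (v, u) \<Longrightarrow> mk' p = mk p"
    and ns: "\<not> stopped c i" and pu: "pos c i = u"
  shows "\<forall>k. stopped c k \<longrightarrow> active_marker Adj mk' (((pos c)(i := v)) k) = None"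
proof (intro allI impI)
  fix k assume sk: "stopped c k"
  have ki: "k \<noteq> i"
  proof
    assume "k = i" with ns sk show False by simp
  qed
  define p where "p = pos c k"
  have allD: "\<forall>y. (p, y) \<in> Adj \<longrightarrow> mk (p, y) = MD" using st sk am_None_iff p_def by metis
  have "p \<noteq> u" using allD uv nD pu by auto
  moreover have "p \<noteq> v"
  proof
    assume "p = v"
    then have "mk (v, u) = MD" using allD uv sy by (auto dest: symD)
    then have "mk (u, v) = MD" using DD uv sy by (auto dest: symD)
    then show False using nD by simp
  qed
  ultimately have "\<forall>y. (p, y) \<in> Adj \<longrightarrow> mk' (p, y) = MD" using allD same by auto
  then show "active_marker Adj mk' (((pos c)(i := v)) k) = None"
    using ki p_def am_None_iff by (metis fun_upd_other)
qed

lemma move_U: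
  assumes I: "sinv Adj c r P" and sy: "sym Adj" and irr: "irrefl Adj"
    and ns: "\<not> stopped c i" and uv: "(pos c i, v) \<in> Adj"
    and am: "active_marker Adj (marks c) (pos c i) = Some Unm"
    and mu: "marks c (pos c i, v) = Unm"
  shows "sinv Adj (c\<lparr>marks := apply_row (marks c) (visited c) (pos c i) v,
                     pos := (pos c)(i := v), visited := insert v (visited c)\<rparr>) r (P(i := P i @ [v]))"
proof -
  note J = invD[OF I]
  define u where "u = pos c i"
  define mk where "mk = marks c"
  define vis where "vis = visited c"
  define mk' where "mk' = mk((u, v) := ME, (v, u) := (if v \<in> vis then MB else MF))"
  define P' where "P' = P(i := P i @ [v])"
  define c' where "c' = c\<lparr>marks := apply_row (marks c) (visited c) (pos c i) v,
                     pos := (pos c)(i := v), visited := insert v (visited c)\<rparr>"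
  have uv': "(u,v) \<in> Adj" using uv u_def by simp
  have vu: "(v,u) \<in> Adj" using uv' sy by (auto dest: symD)
  have une: "u \<noteq> v" using uv' irr by (auto simp: irrefl_def)
  have muv: "mk (u,v) = Unm" using mu by (simp add: u_def mk_def)
  have mvu: "mk (v,u) = Unm" using J(8) uv' muv mk_def by blast
  have mk'_eq: "apply_row (marks c) (visited c) (pos c i) v = mk'"
    unfolding apply_row_def mk'_def mk_def[symmetric] vis_def[symmetric] u_def[symmetric]
    using muv mvu by simp
  have noB: "\<forall>y. (u,y) \<in> Adj \<longrightarrow> mk (u,y) \<noteq> MB"
    using am_cases[OF am] by (auto simp: has_passage_def u_def mk_def)
  have uvis: "u \<in> vis" using J(15) u_def vis_def by simp
  have nopn_uv: "\<not> opn r P (u,v)" using J(5) muv mk_def by fastforce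
  have nopn_vu: "\<not> opn r P (v,u)" using J(5) mvu mk_def by fastforce
  have hu: "u = last (r # P i)" using J(2) u_def by simp
  have eoi: "eo r (P' i) = eo r (P i) @ [(u,v)]"
    unfolding P'_def fun_upd_same eo_snoc hu[symmetric] ..
  have eok: "k \<noteq> i \<Longrightarrow> P' k = P k" for k using P'_def by simp
  have opn': "opn r P' e \<longleftrightarrow> opn r P e \<or> e = (u,v)" for e
  proof
    assume "opn r P' e"
    then obtain k where "e \<in> set (eo r (P' k))" unfolding opn_def by blast
    then show "opn r P e \<or> e = (u,v)" using eoi eok unfolding opn_def by (cases "k = i") auto
  next
    assume "opn r P e \<or> e = (u,v)"
    then show "opn r P' e"
    proof
      assume "opn r P e"
      then obtain k where ek: "e \<in> set (eo r (P k))" unfolding opn_def by blast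
      show "opn r P' e" unfolding opn_def
      proof (cases "k = i")
        case True then show "\<exists>k. e \<in> set (eo r (P' k))" using ek eoi by (intro exI[of _ i]) auto
      next
        case False then show "\<exists>k. e \<in> set (eo r (P' k))" using ek eok[OF False] by (intro exI[of _ k]) auto
      qed
    next
      assume "e = (u, v)" then show "opn r P' e" using eoi unfolding opn_def by (intro exI[of _ i]) simp
    qed
  qed
  have sel: "marks c' = mk'" "pos c' = (pos c)(i:=v)" "visited c' = insert v vis"
      "stopped c' = stopped c"
    by (simp_all add: c'_def mk'_eq vis_def)
  have "sinv Adj c' r P'"
    unfolding sinv_def sel
  proof (intro conjI)
    show "r \<in> insert v vis" using J(1) vis_def by simp
    show "\<forall>k. ((pos c)(i := v)) k = last (r # P' k)" using J(2) by (simp add: P'_def)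
    show "\<forall>k. distinct (eo r (P' k))"
    proof
      fix k show "distinct (eo r (P' k))"
        using J(3) nopn_uv eoi eok[of k] unfolding opn_def by (cases "k = i") auto
    qed
    show "\<forall>k k' e. k \<noteq> k' \<longrightarrow> e \<in> set (eo r (P' k)) \<longrightarrow> e \<notin> set (eo r (P' k'))"
    proof (intro allI impI)
      fix k k' e assume kk: "k \<noteq> k'" and ek: "e \<in> set (eo r (P' k))"
      show "e \<notin> set (eo r (P' k'))"
      proof (cases "k = i")
        case True
        then have k'i: "k' \<noteq> i" using kk by simp
        have "e \<in> set (eo r (P k)) \<or> e = (u, v)" using ek eoi True by auto
        then show ?thesis
        proof
          assume "e \<in> set (eo r (P k))"
          then show ?thesis using J(4)[rule_format, OF kk] eok[OF k'i] by simp
        next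
          assume "e = (u, v)"
          then show ?thesis using nopn_uv eok[OF k'i] unfolding opn_def by auto
        qed
      next
        case False
        have ek0: "e \<in> set (eo r (P k))" using ek eok[OF False] by simp
        have n1: "e \<notin> set (eo r (P k'))" using J(4)[rule_format, OF kk ek0] .
        have n2: "e \<noteq> (u, v)" using ek0 nopn_uv unfolding opn_def by auto
        show ?thesis
        proof (cases "k' = i")
          case True then show ?thesis using n1 n2 eoi by simp
        next
          case False then show ?thesis using n1 eok[OF False] by simp
        qed
      qed
    qed
    show "\<forall>a b. opn r P' (a, b) \<longrightarrow> (a, b) \<in> Adj \<and> mk' (a, b) = ME \<and> mk' (b, a) \<in> {MF, MB}"
      using J(5) opn' nopn_vu nopn_uv une uv' vu unfolding mk'_def mk_def by auto
    show "\<forall>a b. (a, b) \<in> Adj \<longrightarrow> mk' (a, b) = ME \<longrightarrow> opn r P' (a, b)"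
      using J(6) opn' unfolding mk'_def mk_def by auto
    show "\<forall>a b. (a, b) \<in> Adj \<longrightarrow> mk' (a, b) \<in> {MF, MB} \<longrightarrow> opn r P' (b, a)"
      using J(7) opn' une unfolding mk'_def mk_def by auto
    show "\<forall>a b. (a, b) \<in> Adj \<longrightarrow> mk' (a, b) = Unm \<longrightarrow> mk' (b, a) = Unm"
      using J(8) une unfolding mk'_def mk_def by auto
    show "\<forall>a b. (a, b) \<in> Adj \<longrightarrow> mk' (a, b) = MD \<longrightarrow> mk' (b, a) = MD"
      using J(9) une unfolding mk'_def mk_def by auto
    show "\<forall>k a b. (a, b) \<in> set (butlast (eo r (P' k))) \<longrightarrow> mk' (b, a) = MF"
    proof (intro allI impI)
      fix k a b assume ab: "(a, b) \<in> set (butlast (eo r (P' k)))"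
      show "mk' (b, a) = MF"
      proof (cases "k = i")
        case False
        then have "(a, b) \<in> set (butlast (eo r (P k)))" using ab eok by simp
        moreover from this have "opn r P (a,b)" unfolding opn_def by (meson in_set_butlastD)
        ultimately show ?thesis using J(10) nopn_uv nopn_vu unfolding mk'_def mk_def
          by (metis Pair_inject fun_upd_apply)
      next
        case True
        then have ab2: "(a, b) \<in> set (eo r (P i))" using ab eoi by simp
        then have oab: "opn r P (a,b)" unfolding opn_def by blast
        have "mk (b, a) = MF"
        proof (cases "(a, b) \<in> set (butlast (eo r (P i)))")
          case True then show ?thesis using J(10) mk_def by blast
        next
          case False
          have ne: "P i \<noteq> []" using ab2 by auto
          have "eo r (P i) = butlast (eo r (P i)) @ [last (eo r (P i))]"
            using ne eo_Nil_iff by (metis append_butlast_last_id)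
          then have "(a, b) = last (eo r (P i))" using ab2 False
            by (metis UnE empty_iff empty_set set_ConsD set_append)
          also have "\<dots> = (last (r # butlast (P i)), last (P i))"
            using eo_last[OF ne, of r] by simp
          finally have "b = u" using J(2) ne u_def by (simp add: last_ConsR)
          moreover have "mk (b, a) \<in> {MF, MB}" using J(5) oab mk_def by blast
          moreover have "(b, a) \<in> Adj" using J(5) oab sy by (auto dest: symD)
          ultimately show ?thesis using noB by auto
        qed
        then show ?thesis using nopn_uv nopn_vu oab unfolding mk'_def
          by (metis Pair_inject fun_upd_apply)
      qed
    qed
    show "\<forall>a x y. (a, x) \<in> Adj \<longrightarrow> (a, y) \<in> Adj \<longrightarrow> mk' (a, x) = MF \<longrightarrow> mk' (a, y) = MF \<longrightarrow> x = y"
      using J(11) J(14) une unfolding mk'_def mk_def vis_def by (auto split: if_splits)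
    show "\<forall>x. (r, x) \<in> Adj \<longrightarrow> mk' (r, x) \<noteq> MF"
      using J(12) J(1) une unfolding mk'_def mk_def vis_def by (auto split: if_splits)
    show "\<forall>x y. x \<in> insert v vis \<longrightarrow> (x, y) \<in> Adj \<longrightarrow> mk' (x, y) = Unm \<longrightarrow>
           x = r \<or> (\<exists>z. (x, z) \<in> Adj \<and> mk' (x, z) = MF)"
    proof (intro allI impI)
      fix x y assume xv: "x \<in> insert v vis" and xy: "(x, y) \<in> Adj" and mxy: "mk' (x, y) = Unm"
      have nm: "(x, y) \<noteq> (u, v)" "(x, y) \<noteq> (v, u)" using mxy une unfolding mk'_def by (auto split: if_splits)
      then have mxy0: "mk (x, y) = Unm" using mxy unfolding mk'_def by (auto split: if_splits)
      show "x = r \<or> (\<exists>z. (x, z) \<in> Adj \<and> mk' (x, z) = MF)"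
      proof (cases "x \<in> vis")
        case True
        then have "x = r \<or> (\<exists>z. (x, z) \<in> Adj \<and> mk (x, z) = MF)"
          using J(13) xy mxy0 mk_def vis_def by blast
        then show ?thesis using muv mvu unfolding mk'_def by (metis fun_upd_apply marker.distinct(7))
      next
        case False
        then have "x = v" using xv by simp
        then show ?thesis using False vu unfolding mk'_def by auto
      qed
    qed
    show "\<forall>a b. (a, b) \<in> Adj \<longrightarrow> mk' (a, b) \<noteq> Unm \<longrightarrow> a \<in> insert v vis \<and> b \<in> insert v vis"
      using J(14) uvis unfolding mk'_def mk_def vis_def by (auto split: if_splits)
    show "\<forall>k. ((pos c)(i := v)) k \<in> insert v vis" using J(15) vis_def by simp
    show "\<forall>k. stopped c k \<longrightarrow> active_marker Adj mk' (((pos c)(i := v)) k) = None"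
      apply (rule stopped_pres[where u = u and mk = mk])
      using J(16) muv J(9) uv' sy ns u_def unfolding mk_def mk'_def by auto
  qed
  then show ?thesis unfolding c'_def P'_def .
qed

lemma move_close:
  assumes I: "sinv Adj c r P" and sy: "sym Adj" and irr: "irrefl Adj"
    and ns: "\<not> stopped c i" and uv: "(pos c i, v) \<in> Adj"
    and am: "active_marker Adj (marks c) (pos c i) = Some (marks c (pos c i, v))"
    and mf: "marks c (pos c i, v) \<in> {MF, MB}"
    and ne: "P i \<noteq> []" and le: "last (eo r (P i)) = (v, pos c i)"
  shows "sinv Adj (c\<lparr>marks := apply_row (marks c) (visited c) (pos c i) v,
                     pos := (pos c)(i := v), visited := insert v (visited c)\<rparr>) r (P(i := butlast (P i)))"
proof -
  note J = invD[OF I]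
  define u where "u = pos c i"
  define mk where "mk = marks c"
  define vis where "vis = visited c"
  define ys where "ys = butlast (P i)"
  define mk' where "mk' = mk((u, v) := MD, (v, u) := MD)"
  define P' where "P' = P(i := ys)"
  define c' where "c' = c\<lparr>marks := apply_row (marks c) (visited c) (pos c i) v,
                     pos := (pos c)(i := v), visited := insert v (visited c)\<rparr>"
  have uv': "(u,v) \<in> Adj" using uv u_def by simp
  have vu: "(v,u) \<in> Adj" using uv' sy by (auto dest: symD)
  have une: "u \<noteq> v" using uv' irr by (auto simp: irrefl_def)
  have muv: "mk (u,v) \<in> {MF, MB}" using mf by (simp add: u_def mk_def)
  have eoP: "eo r (P i) = eo r ys @ [(v, u)]"
  proof -
    have "eo r (P i) = eo r ys @ [(last (r # ys), last (P i))]" using eo_last[OF ne] ys_def by simp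
    moreover have "last (eo r (P i)) = (last (r # ys), last (P i))" using calculation by simp
    ultimately show ?thesis using le u_def by simp
  qed
  have ovu: "opn r P (v, u)" unfolding opn_def using eoP by (intro exI[of _ i]) simp
  have mvu: "mk (v,u) = ME" using J(5) ovu mk_def by blast
  have nopn_uv: "\<not> opn r P (u,v)" using J(5) muv mk_def by fastforce
  have vlast: "v = last (r # ys)"
  proof -
    have "eo r (P i) = eo r ys @ [(last (r # ys), last (P i))]" using eo_last[OF ne] ys_def by simp
    then show ?thesis using eoP by simp
  qed
  have dys: "distinct (eo r ys @ [(v, u)])" using J(3) eoP by metis
  have vuys: "(v, u) \<notin> set (eo r ys)" using dys by simp
  have mk'_eq: "apply_row (marks c) (visited c) (pos c i) v = mk'"
    unfolding apply_row_def mk'_def mk_def[symmetric] vis_def[symmetric] u_def[symmetric]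
    using muv by auto
  have vvis: "v \<in> vis" using J(14) uv' muv mk_def vis_def by fastforce
  have eok: "k \<noteq> i \<Longrightarrow> P' k = P k" for k using P'_def by simp
  have opn': "opn r P' e \<longleftrightarrow> opn r P e \<and> e \<noteq> (v, u)" for e
  proof
    assume "opn r P' e"
    then obtain k where ek: "e \<in> set (eo r (P' k))" unfolding opn_def by blast
    show "opn r P e \<and> e \<noteq> (v, u)"
    proof (cases "k = i")
      case True
      then have "e \<in> set (eo r ys)" using ek P'_def by simp
      then show ?thesis using eoP vuys unfolding opn_def by (metis Un_iff set_append)
    next
      case False
      then have e0: "e \<in> set (eo r (P k))" using ek eok by simp
      have "e \<noteq> (v, u)" using J(4)[rule_format, OF False e0] eoP by auto
      then show ?thesis using e0 unfolding opn_def by blast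
    qed
  next
    assume a: "opn r P e \<and> e \<noteq> (v, u)"
    then obtain k where ek: "e \<in> set (eo r (P k))" unfolding opn_def by blast
    show "opn r P' e" unfolding opn_def
    proof (cases "k = i")
      case True then show "\<exists>k. e \<in> set (eo r (P' k))" using ek eoP a P'_def by (intro exI[of _ i]) auto
    next
      case False then show "\<exists>k. e \<in> set (eo r (P' k))" using ek eok[OF False] by (intro exI[of _ k]) auto
    qed
  qed
  have sel: "marks c' = mk'" "pos c' = (pos c)(i:=v)" "visited c' = vis"
      "stopped c' = stopped c"
    using vvis by (simp_all add: c'_def mk'_eq vis_def insert_absorb)
  have "sinv Adj c' r P'"
    unfolding sinv_def sel
  proof (intro conjI)
    show "r \<in> vis" using J(1) vis_def by simp
    show "\<forall>k. ((pos c)(i := v)) k = last (r # P' k)" using J(2) vlast by (simp add: P'_def)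
    show "\<forall>k. distinct (eo r (P' k))"
    proof
      fix k show "distinct (eo r (P' k))"
        using J(3) dys eok[of k] P'_def by (cases "k = i") auto
    qed
    show "\<forall>k k' e. k \<noteq> k' \<longrightarrow> e \<in> set (eo r (P' k)) \<longrightarrow> e \<notin> set (eo r (P' k'))"
    proof (intro allI impI)
      fix k k' e assume kk: "k \<noteq> k'" and ek: "e \<in> set (eo r (P' k))"
      have sub: "set (eo r (P' x)) \<subseteq> set (eo r (P x))" for x
        using eoP eok[of x] P'_def by (cases "x = i") auto
      show "e \<notin> set (eo r (P' k'))" using J(4)[rule_format, OF kk] sub ek by blast
    qed
    show "\<forall>a b. opn r P' (a, b) \<longrightarrow> (a, b) \<in> Adj \<and> mk' (a, b) = ME \<and> mk' (b, a) \<in> {MF, MB}"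
      using J(5) opn' nopn_uv une unfolding mk'_def mk_def by auto
    show "\<forall>a b. (a, b) \<in> Adj \<longrightarrow> mk' (a, b) = ME \<longrightarrow> opn r P' (a, b)"
      using J(6) opn' unfolding mk'_def mk_def by auto
    show "\<forall>a b. (a, b) \<in> Adj \<longrightarrow> mk' (a, b) \<in> {MF, MB} \<longrightarrow> opn r P' (b, a)"
      using J(7) opn' une unfolding mk'_def mk_def by auto
    show "\<forall>a b. (a, b) \<in> Adj \<longrightarrow> mk' (a, b) = Unm \<longrightarrow> mk' (b, a) = Unm"
      using J(8) une unfolding mk'_def mk_def by auto
    show "\<forall>a b. (a, b) \<in> Adj \<longrightarrow> mk' (a, b) = MD \<longrightarrow> mk' (b, a) = MD"
      using J(9) une unfolding mk'_def mk_def by auto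
    show "\<forall>k a b. (a, b) \<in> set (butlast (eo r (P' k))) \<longrightarrow> mk' (b, a) = MF"
    proof (intro allI impI)
      fix k a b assume ab: "(a, b) \<in> set (butlast (eo r (P' k)))"
      have ab1: "(a, b) \<in> set (butlast (eo r (P k)))" and ab2: "(a,b) \<noteq> (v, u)"
      proof -
        have "(a, b) \<in> set (butlast (eo r (P k))) \<and> (a,b) \<noteq> (v, u)"
        proof (cases "k = i")
          case True
          then have "(a, b) \<in> set (eo r ys)" using ab P'_def by (auto dest: in_set_butlastD)
          then show ?thesis using True eoP vuys by auto
        next
          case False
          then have e0: "(a, b) \<in> set (butlast (eo r (P k)))" using ab eok by simp
          then have "(a, b) \<noteq> (v, u)" using J(4)[rule_format, OF False] eoP
            by (metis Un_iff empty_set in_set_butlastD list.simps(15) set_append singletonI)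
          then show ?thesis using e0 by simp
        qed
        then show "(a, b) \<in> set (butlast (eo r (P k)))" "(a,b) \<noteq> (v, u)" by auto
      qed
      have "mk (b, a) = MF" using J(10) ab1 mk_def by blast
      then show "mk' (b, a) = MF" using ab2 mvu unfolding mk'_def by auto
    qed
    show "\<forall>a x y. (a, x) \<in> Adj \<longrightarrow> (a, y) \<in> Adj \<longrightarrow> mk' (a, x) = MF \<longrightarrow> mk' (a, y) = MF \<longrightarrow> x = y"
      using J(11) une unfolding mk'_def mk_def by (auto split: if_splits)
    show "\<forall>x. (r, x) \<in> Adj \<longrightarrow> mk' (r, x) \<noteq> MF"
      using J(12) une unfolding mk'_def mk_def by (auto split: if_splits)
    show "\<forall>x y. x \<in> vis \<longrightarrow> (x, y) \<in> Adj \<longrightarrow> mk' (x, y) = Unm \<longrightarrow>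
           x = r \<or> (\<exists>z. (x, z) \<in> Adj \<and> mk' (x, z) = MF)"
    proof (intro allI impI)
      fix x y assume xv: "x \<in> vis" and xy: "(x, y) \<in> Adj" and mxy: "mk' (x, y) = Unm"
      have mxy0: "mk (x, y) = Unm" using mxy une unfolding mk'_def by (auto split: if_splits)
      have "x = r \<or> (\<exists>z. (x, z) \<in> Adj \<and> mk (x, z) = MF)"
        using J(13) xv xy mxy0 mk_def vis_def by blast
      moreover have "x \<noteq> u \<or> mk (u, v) \<noteq> MF"
        using am_cases[OF am] xy mxy0 unfolding u_def mk_def has_passage_def by auto
      ultimately show "x = r \<or> (\<exists>z. (x, z) \<in> Adj \<and> mk' (x, z) = MF)"
        using mvu unfolding mk'_def by (metis fun_upd_apply marker.distinct(19) prod.inject)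
    qed
    show "\<forall>a b. (a, b) \<in> Adj \<longrightarrow> mk' (a, b) \<noteq> Unm \<longrightarrow> a \<in> vis \<and> b \<in> vis"
      using J(14) muv mvu une unfolding mk'_def mk_def vis_def by (auto split: if_splits)
    show "\<forall>k. ((pos c)(i := v)) k \<in> vis" using J(15) vvis vis_def by simp
    show "\<forall>k. stopped c k \<longrightarrow> active_marker Adj mk' (((pos c)(i := v)) k) = None"
      apply (rule stopped_pres[where u = u and mk = mk])
      using J(16) muv J(9) uv' sy ns u_def unfolding mk_def mk'_def by auto
  qed
  then show ?thesis unfolding c'_def P'_def ys_def .
qed

lemma last_eo: "xs \<noteq> [] \<Longrightarrow> last (eo r xs) = (last (r # butlast xs), last xs)"
  using eo_last[of xs r] by (metis last_snoc)

lemma opn_swap: "opn r (\<lambda>k. P (\<not> k)) e = opn r P e"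
  unfolding opn_def ex_bool_eq by auto

lemma inv_swap:
  assumes I: "sinv Adj c r P" and eq: "pos c True = pos c False"
  shows "sinv Adj c r (\<lambda>k. P (\<not> k))"
proof -
  have p: "\<forall>k. pos c k = last (r # P (\<not> k))" using invD(2)[OF I] eq by (metis (full_types))
  have d: "\<forall>k k' e. k \<noteq> k' \<longrightarrow> e \<in> set (eo r (P (\<not>k))) \<longrightarrow> e \<notin> set (eo r (P (\<not>k')))"
    using invD(4)[OF I] by (metis (full_types))
  have b: "\<forall>k a b. (a, b) \<in> set (butlast (eo r (P (\<not>k)))) \<longrightarrow> marks c (b, a) = MF"
    using invD(10)[OF I] by blast
  have ds: "\<forall>k. distinct (eo r (P (\<not>k)))" using invD(3)[OF I] by blast
  show ?thesis using I unfolding sinv_def opn_swap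
    apply (elim conjE)
    apply (intro conjI)
    apply (assumption | rule p d b ds)+
    done
qed

lemma move_E:
  assumes I: "sinv Adj c r P" and sy: "sym Adj" and irr: "irrefl Adj"
    and ns: "\<not> stopped c i" and uv: "(pos c i, v) \<in> Adj"
    and am: "active_marker Adj (marks c) (pos c i) = Some ME"
    and me: "marks c (pos c i, v) = ME"
  shows "\<exists>r' P'. sinv Adj (c\<lparr>marks := apply_row (marks c) (visited c) (pos c i) v,
                     pos := (pos c)(i := v), visited := insert v (visited c)\<rparr>) r' P'"
proof -
  note J = invD[OF I]
  define u where "u = pos c i"
  define mk where "mk = marks c"
  define vis where "vis = visited c"
  define mk' where "mk' = mk((u, v) := MD, (v, u) := MD)"
  define c' where "c' = c\<lparr>marks := apply_row (marks c) (visited c) (pos c i) v,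
                     pos := (pos c)(i := v), visited := insert v (visited c)\<rparr>"
  have uv': "(u,v) \<in> Adj" using uv u_def by simp
  have vu: "(v,u) \<in> Adj" using uv' sy by (auto dest: symD)
  have une: "u \<noteq> v" using uv' irr by (auto simp: irrefl_def)
  have muv: "mk (u,v) = ME" using me by (simp add: u_def mk_def)
  have noBUF: "\<forall>y. (u,y) \<in> Adj \<longrightarrow> mk (u,y) \<noteq> MB \<and> mk (u,y) \<noteq> Unm \<and> mk (u,y) \<noteq> MF"
    using am_cases[OF am] by (auto simp: has_passage_def u_def mk_def)
  have Pi: "P i = []"
  proof (rule ccontr)
    assume ne: "P i \<noteq> []"
    define z where "z = last (r # butlast (P i))"
    have "last (eo r (P i)) = (z, u)" using last_eo[OF ne] J(2) ne u_def z_def by simp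
    then have "(z, u) \<in> set (eo r (P i))" using ne eo_Nil_iff last_in_set by metis
    then have "opn r P (z, u)" unfolding opn_def by blast
    then have "(z, u) \<in> Adj" "mk (u, z) \<in> {MF, MB}" using J(5) mk_def by auto
    then show False using noBUF sy by (auto dest: symD)
  qed
  have ur: "u = r" using J(2) Pi u_def by simp
  have orv: "opn r P (r, v)" using J(6) uv' muv mk_def ur by blast
  then obtain j where ej: "(r, v) \<in> set (eo r (P j))" unfolding opn_def by blast
  have ji: "j \<noteq> i"
  proof
    assume "j = i" with ej Pi show False by simp
  qed
  have oth: "k \<noteq> j \<Longrightarrow> k = i" for k using ji by blast
  obtain ys where Pj: "P j = v # ys"
  proof (cases "P j")
    case Nil then show ?thesis using ej by simp
  next
    case (Cons x ys)
    have "(r, v) = (r, x)"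
    proof (rule ccontr)
      assume "(r, v) \<noteq> (r, x)"
      then have "(r, v) \<in> set (eo x ys)" using ej Cons by simp
      then have "r = x \<or> (\<exists>c. (c, r) \<in> set (eo x ys))" using eo_src by metis
      then show False
      proof
        assume "r = x"
        moreover have "(r, x) \<in> Adj" using J(5) Cons unfolding opn_def
          by (metis eo.simps(2) list.set_intros(1))
        ultimately show False using irr by (auto simp: irrefl_def)
      next
        assume "\<exists>c. (c, r) \<in> set (eo x ys)"
        then obtain d where "(d, r) \<in> set (eo x ys)" by blast
        then have "opn r P (d, r)" using Cons unfolding opn_def by (metis eo.simps(2) list.set_intros(2))
        then have "(d, r) \<in> Adj" "mk (r, d) \<in> {MF, MB}" using J(5) mk_def by auto
        then show False using noBUF sy ur by (auto dest: symD)
      qed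
    qed
    then show ?thesis using Cons that by simp
  qed
  have eoPj: "eo r (P j) = (r, v) # eo v ys" using Pj by simp
  have mvr: "mk (v, r) \<in> {MF, MB}" using J(5) orv mk_def by blast
  have dys: "distinct ((r, v) # eo v ys)" using J(3) eoPj by metis
  have rvys: "(r, v) \<notin> set (eo v ys)" using dys by simp
  have mk'_eq: "apply_row (marks c) (visited c) (pos c i) v = mk'"
    unfolding apply_row_def mk'_def mk_def[symmetric] vis_def[symmetric] u_def[symmetric]
    using muv by auto
  have vvis: "v \<in> vis" using J(14) uv' muv mk_def vis_def by fastforce
  define P' where "P' = P(j := ys)"
  have P'i: "P' i = []" using Pi ji P'_def by simp
  have P'j: "P' j = ys" using P'_def by simp
  have eo'i: "eo v (P' i) = []" using P'i by simp
  have kj': "k = j" if "e \<in> set (eo v (P' k))" for k e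
  proof (rule ccontr)
    assume "k \<noteq> j" then have "k = i" by (rule oth)
    with that eo'i show False by simp
  qed
  have kj0: "k = j" if "e \<in> set (eo r (P k))" for k e
  proof (rule ccontr)
    assume "k \<noteq> j" then have "k = i" by (rule oth)
    with that Pi show False by simp
  qed
  have nopn_vr: "\<not> opn r P (v, r)" using J(5) mvr mk_def by fastforce
  have opn': "opn v P' e \<longleftrightarrow> opn r P e \<and> e \<noteq> (r, v)" for e
  proof
    assume "opn v P' e"
    then obtain k where ek: "e \<in> set (eo v (P' k))" unfolding opn_def by blast
    then have "k = j" by (rule kj')
    then have "e \<in> set (eo v ys)" using ek P'j by simp
    then show "opn r P e \<and> e \<noteq> (r, v)" using eoPj rvys unfolding opn_def
      by (metis list.set_intros(2))
  next
    assume a: "opn r P e \<and> e \<noteq> (r, v)"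
    then obtain k where ek: "e \<in> set (eo r (P k))" unfolding opn_def by blast
    then have "k = j" by (rule kj0)
    then have "e \<in> set (eo v ys)" using ek eoPj a by simp
    then show "opn v P' e" unfolding opn_def using P'j by (intro exI[of _ j]) simp
  qed
  have sel: "marks c' = mk'" "pos c' = (pos c)(i:=v)" "visited c' = vis"
      "stopped c' = stopped c"
    using vvis by (simp_all add: c'_def mk'_eq vis_def insert_absorb)
  have "sinv Adj c' v P'"
    unfolding sinv_def sel
  proof (intro conjI)
    show "v \<in> vis" using vvis .
    show "\<forall>k. ((pos c)(i := v)) k = last (v # P' k)"
    proof
      fix k show "((pos c)(i := v)) k = last (v # P' k)"
      proof (cases "k = i")
        case True then show ?thesis using P'i by simp
      next
        case False have "k = j"
        proof (rule ccontr)
          assume "k \<noteq> j" then have "k = i" by (rule oth)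
          with False show False by simp
        qed
        then show ?thesis using J(2) Pj P'j False by simp
      qed
    qed
    show "\<forall>k. distinct (eo v (P' k))"
    proof
      fix k show "distinct (eo v (P' k))"
      proof (cases "k = j")
        case True then show ?thesis using dys P'j by simp
      next
        case False then have "k = i" by (rule oth)
        then show ?thesis using eo'i by simp
      qed
    qed
    show "\<forall>k k' e. k \<noteq> k' \<longrightarrow> e \<in> set (eo v (P' k)) \<longrightarrow> e \<notin> set (eo v (P' k'))"
    proof (intro allI impI)
      fix k k' e assume kk: "k \<noteq> k'" and ek: "e \<in> set (eo v (P' k))"
      have "k = j" using ek by (rule kj')
      then have "k' \<noteq> j" using kk by simp
      then have "k' = i" by (rule oth)
      then show "e \<notin> set (eo v (P' k'))" using eo'i by simp
    qed
    show "\<forall>a b. opn v P' (a, b) \<longrightarrow> (a, b) \<in> Adj \<and> mk' (a, b) = ME \<and> mk' (b, a) \<in> {MF, MB}"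
      using J(5) opn' nopn_vr une ur unfolding mk'_def mk_def by auto
    show "\<forall>a b. (a, b) \<in> Adj \<longrightarrow> mk' (a, b) = ME \<longrightarrow> opn v P' (a, b)"
      using J(6) opn' ur unfolding mk'_def mk_def by auto
    show "\<forall>a b. (a, b) \<in> Adj \<longrightarrow> mk' (a, b) \<in> {MF, MB} \<longrightarrow> opn v P' (b, a)"
      using J(7) opn' une ur unfolding mk'_def mk_def by auto
    show "\<forall>a b. (a, b) \<in> Adj \<longrightarrow> mk' (a, b) = Unm \<longrightarrow> mk' (b, a) = Unm"
      using J(8) une unfolding mk'_def mk_def by auto
    show "\<forall>a b. (a, b) \<in> Adj \<longrightarrow> mk' (a, b) = MD \<longrightarrow> mk' (b, a) = MD"
      using J(9) une unfolding mk'_def mk_def by auto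
    show "\<forall>k a b. (a, b) \<in> set (butlast (eo v (P' k))) \<longrightarrow> mk' (b, a) = MF"
    proof (intro allI impI)
      fix k a b assume ab: "(a, b) \<in> set (butlast (eo v (P' k)))"
      then have "k = j" using kj' in_set_butlastD by metis
      then have ab1: "(a, b) \<in> set (butlast (eo v ys))" using ab P'j by simp
      then have ab0: "(a, b) \<in> set (eo v ys)" by (rule in_set_butlastD)
      have "(a, b) \<in> set (butlast ((r, v) # eo v ys))" using ab1 by (cases "eo v ys") auto
      then have "(a, b) \<in> set (butlast (eo r (P j)))" using eoPj by simp
      then have "mk (b, a) = MF" using J(10) mk_def by blast
      moreover have "(a, b) \<noteq> (r, v)" using ab0 rvys by auto
      ultimately show "mk' (b, a) = MF" using muv ur unfolding mk'_def by auto
    qed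
    show "\<forall>a x y. (a, x) \<in> Adj \<longrightarrow> (a, y) \<in> Adj \<longrightarrow> mk' (a, x) = MF \<longrightarrow> mk' (a, y) = MF \<longrightarrow> x = y"
      using J(11) une unfolding mk'_def mk_def by (auto split: if_splits)
    show "\<forall>x. (v, x) \<in> Adj \<longrightarrow> mk' (v, x) \<noteq> MF"
    proof (intro allI impI notI)
      fix x assume vx: "(v, x) \<in> Adj" and mx: "mk' (v, x) = MF"
      have xr: "x \<noteq> r" using mx ur unfolding mk'_def by auto
      have mx0: "mk (v, x) = MF" using mx une xr ur unfolding mk'_def by auto
      have "opn r P (x, v)" using J(7) vx mx0 mk_def by auto
      then obtain k where "(x, v) \<in> set (eo r (P k))" unfolding opn_def by blast
      moreover from this have "k = j" by (rule kj0)
      ultimately have "(x, v) \<in> set ((r, v) # eo v ys)" using eoPj by simp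
      then have "(x, v) \<in> set (eo v ys)" using xr by auto
      then have "ys \<noteq> []" by auto
      then have "eo v ys \<noteq> []" by (simp add: eo_Nil_iff)
      then have "(r, v) \<in> set (butlast (eo r (P j)))" using eoPj by (cases "eo v ys") auto
      then have "mk (v, r) = MF" using J(10) mk_def by blast
      then show False using J(11) vx vu ur mx0 xr mk_def by metis
    qed
    show "\<forall>x y. x \<in> vis \<longrightarrow> (x, y) \<in> Adj \<longrightarrow> mk' (x, y) = Unm \<longrightarrow>
           x = v \<or> (\<exists>z. (x, z) \<in> Adj \<and> mk' (x, z) = MF)"
    proof (intro allI impI)
      fix x y assume xv: "x \<in> vis" and xy: "(x, y) \<in> Adj" and mxy: "mk' (x, y) = Unm"
      have mxy0: "mk (x, y) = Unm" using mxy une unfolding mk'_def by (auto split: if_splits)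
      have "x = r \<or> (\<exists>z. (x, z) \<in> Adj \<and> mk (x, z) = MF)"
        using J(13) xv xy mxy0 mk_def vis_def by blast
      moreover have "x \<noteq> r" using noBUF xy mxy0 ur by auto
      ultimately obtain z where "(x, z) \<in> Adj" "mk (x, z) = MF" by blast
      then show "x = v \<or> (\<exists>z. (x, z) \<in> Adj \<and> mk' (x, z) = MF)"
        using muv unfolding mk'_def by (metis fun_upd_apply marker.distinct(19) prod.inject)
    qed
    show "\<forall>a b. (a, b) \<in> Adj \<longrightarrow> mk' (a, b) \<noteq> Unm \<longrightarrow> a \<in> vis \<and> b \<in> vis"
      using J(14) muv une uv' unfolding mk'_def mk_def vis_def by (auto split: if_splits)
    show "\<forall>k. ((pos c)(i := v)) k \<in> vis" using J(15) vvis vis_def by simp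
    show "\<forall>k. stopped c k \<longrightarrow> active_marker Adj mk' (((pos c)(i := v)) k) = None"
      apply (rule stopped_pres[where u = u and mk = mk])
      using J(16) muv J(9) uv' sy ns u_def unfolding mk_def mk'_def by auto
  qed
  then show ?thesis unfolding c'_def by blast
qed

lemma step_inv:
  assumes I: "sinv Adj c r P" and sy: "sym Adj" and irr: "irrefl Adj" and st: "step Adj c l c'"
  shows "\<exists>r' P'. sinv Adj c' r' P'"
  using st
proof cases
  case (move i v)
  note J = invD[OF I]
  define u where "u = pos c i"
  define m where "m = marks c (pos c i, v)"
  have am: "active_marker Adj (marks c) (pos c i) = Some m" using move m_def by simp
  have uv': "(u, v) \<in> Adj" using move u_def by simp
  have vu: "(v, u) \<in> Adj" using uv' sy by (auto dest: symD)
  from am_cases[OF am] show ?thesis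
  proof (elim disjE conjE)
    assume "m = MB"
    then have mB: "marks c (u, v) = MB" using m_def u_def by simp
    have "opn r P (v, u)" using J(7) uv' mB by auto
    then obtain j where ej: "(v, u) \<in> set (eo r (P j))" unfolding opn_def by blast
    have nb: "(v, u) \<notin> set (butlast (eo r (P j)))" using J(10) mB by force
    have nej: "P j \<noteq> []" using ej by auto
    have "eo r (P j) \<noteq> []" using ej by auto
    then have "eo r (P j) = butlast (eo r (P j)) @ [last (eo r (P j))]" by simp
    then have lj: "last (eo r (P j)) = (v, u)" using ej nb
      by (metis UnE empty_iff empty_set set_ConsD set_append)
    have pj: "pos c j = u" using lj last_eo[OF nej] J(2) nej by simp
    show ?thesis
    proof (cases "j = i")
      case True
      show ?thesis using move_close[OF I sy irr move(3) move(4)] move m_def mB u_def lj True nej by blast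
    next
      case False
      have eqp: "pos c True = pos c False" using pj u_def False by (cases i; cases j) auto
      have I2: "sinv Adj c r (\<lambda>k. P (\<not> k))" using inv_swap[OF I eqp] .
      have P2: "P (\<not> i) = P j" using False by (cases i; cases j) auto
      show ?thesis using move_close[OF I2 sy irr move(3) move(4)] move m_def mB u_def lj P2 nej by auto
    qed
  next
    assume "m = Unm"
    then show ?thesis using move_U[OF I sy irr move(3) move(4)] move m_def by auto
  next
    assume mF: "m = MF" and noB: "\<not> has_passage Adj (marks c) (pos c i) MB"
    then have mF': "marks c (u, v) = MF" using m_def u_def by simp
    have nei: "P i \<noteq> []"
    proof
      assume "P i = []"
      then have "u = r" using J(2) u_def by simp
      then show False using J(12) uv' mF' by simp
    qed
    define z where "z = last (r # butlast (P i))"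
    have le: "last (eo r (P i)) = (z, u)" using last_eo[OF nei] J(2) nei u_def z_def by simp
    then have "(z, u) \<in> set (eo r (P i))" using nei eo_Nil_iff last_in_set by metis
    then have "opn r P (z, u)" unfolding opn_def by blast
    then have zu: "(z, u) \<in> Adj" "marks c (u, z) \<in> {MF, MB}" using J(5) by auto
    have uz: "(u, z) \<in> Adj" using zu sy by (auto dest: symD)
    have "marks c (u, z) = MF" using zu uz noB u_def unfolding has_passage_def by auto
    then have "z = v" using J(11) uz uv' mF' by blast
    then show ?thesis using move_close[OF I sy irr move(3) move(4)] move m_def mF u_def le nei by auto
  next
    assume "m = ME"
    then show ?thesis using move_E[OF I sy irr move(3) move(4)] move m_def by auto
  qed
next
  case (halt i)
  have sel: "marks c' = marks c" "pos c' = pos c" "visited c' = visited c"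
    "stopped c' = (stopped c)(i := True)" using halt by simp_all
  have st': "\<forall>k. ((stopped c)(i := True)) k \<longrightarrow> active_marker Adj (marks c) (pos c k) = None"
    using invD(16)[OF I] halt by auto
  have "sinv Adj c' r P"
    unfolding sinv_def sel using I[unfolded sinv_def]
    apply (elim conjE)
    apply (intro conjI)
    apply (assumption | rule st')+
    done
  then show ?thesis by blast
qed

lemma init_inv: "sinv Adj (init_config s) s (\<lambda>_. [])"
  unfolding sinv_def init_config_def opn_def by auto




fun rank :: "marker \<Rightarrow> nat" where
  "rank Unm = 0" | "rank MD = 2" | "rank MB = 1" | "rank ME = 1" | "rank MF = 1"

lemma rank_sym:
  assumes I: "sinv Adj c r P" and sy: "sym Adj" and ab: "(a, b) \<in> Adj"
  shows "rank (marks c (a, b)) = rank (marks c (b, a))"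
proof -
  note J = invD[OF I]
  show ?thesis
  proof (cases "marks c (a, b)")
    case Unm then show ?thesis using J(8) ab by simp
  next
    case MD then show ?thesis using J(9) ab by simp
  next
    case ME
    then have "opn r P (a, b)" using J(6) ab by blast
    then have "marks c (b, a) \<in> {MF, MB}" using J(5) by blast
    then show ?thesis using ME by auto
  next
    case MB
    then have "opn r P (b, a)" using J(7) ab by auto
    then have "marks c (b, a) = ME" using J(5) by blast
    then show ?thesis using MB by auto
  next
    case MF
    then have "opn r P (b, a)" using J(7) ab by auto
    then have "marks c (b, a) = ME" using J(5) by blast
    then show ?thesis using MF by auto
  qed
qed

lemma apply_row_facts:
  assumes I: "sinv Adj c r P" and sy: "sym Adj" and irr: "irrefl Adj"
    and uv: "(u, v) \<in> Adj" and nD: "marks c (u, v) \<noteq> MD"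
  shows "rank (apply_row (marks c) vis u v (u, v)) = Suc (rank (marks c (u, v)))"
    "rank (apply_row (marks c) vis u v (v, u)) = Suc (rank (marks c (v, u)))"
    "rank (marks c (u, v)) \<le> 1" "rank (marks c (v, u)) \<le> 1"
    "\<And>p. p \<noteq> (u, v) \<Longrightarrow> p \<noteq> (v, u) \<Longrightarrow> apply_row (marks c) vis u v p = marks c p"
proof -
  have une: "u \<noteq> v" using uv irr by (auto simp: irrefl_def)
  have vu: "(v, u) \<in> Adj" using uv sy by (auto dest: symD)
  have rs: "rank (marks c (u, v)) = rank (marks c (v, u))" using rank_sym[OF I sy uv] .
  have r1: "rank (marks c (u, v)) \<le> 1" using nD by (cases "marks c (u, v)") auto
  then show "rank (marks c (u, v)) \<le> 1" "rank (marks c (v, u)) \<le> 1" using rs by auto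
  show "\<And>p. p \<noteq> (u, v) \<Longrightarrow> p \<noteq> (v, u) \<Longrightarrow> apply_row (marks c) vis u v p = marks c p"
    unfolding apply_row_def by auto
  show "rank (apply_row (marks c) vis u v (u, v)) = Suc (rank (marks c (u, v)))"
    "rank (apply_row (marks c) vis u v (v, u)) = Suc (rank (marks c (v, u)))"
  proof -
    have "rank (apply_row (marks c) vis u v (u, v)) = Suc (rank (marks c (u, v))) \<and>
          rank (apply_row (marks c) vis u v (v, u)) = Suc (rank (marks c (v, u)))"
    proof (cases "marks c (u, v) = Unm")
      case True
      then have "marks c (v, u) = Unm" using invD(8)[OF I] uv by blast
      then show ?thesis using True une unfolding apply_row_def by auto
    next
      case False
      then have "rank (marks c (u, v)) = 1" using nD by (cases "marks c (u, v)") auto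
      then show ?thesis using False une rs unfolding apply_row_def by auto
    qed
    then show "rank (apply_row (marks c) vis u v (u, v)) = Suc (rank (marks c (u, v)))"
      "rank (apply_row (marks c) vis u v (v, u)) = Suc (rank (marks c (v, u)))" by auto
  qed
qed



definition nst :: "(bool \<Rightarrow> bool) \<Rightarrow> nat" where
  "nst s = (if s True then 0 else 1) + (if s False then 0 else 1)"

lemma nst_less: "\<not> s i \<Longrightarrow> nst (s(i := True)) < nst s"
  unfolding nst_def by (cases i) auto

definition mu :: "('v \<times> 'v) set \<Rightarrow> 'v config \<Rightarrow> nat" where
  "mu Adj c = (\<Sum>p\<in>Adj. 2 - rank (marks c p)) + nst (stopped c)"

lemma step_mu:
  assumes I: "sinv Adj c r P" and sy: "sym Adj" and irr: "irrefl Adj" and fin: "finite Adj"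
    and st: "step Adj c l c'"
  shows "mu Adj c' < mu Adj c"
  using st
proof cases
  case (move i v)
  define u where "u = pos c i"
  have uv: "(u, v) \<in> Adj" using move u_def by simp
  have nD: "marks c (u, v) \<noteq> MD" using move am_notD u_def by metis
  note F = apply_row_facts[OF I sy irr uv nD]
  have mk': "marks c' = apply_row (marks c) (visited c) u v" using move u_def by simp
  have stc: "stopped c' = stopped c" using move(2) by simp
  have "(\<Sum>p\<in>Adj. 2 - rank (marks c' p)) < (\<Sum>p\<in>Adj. 2 - rank (marks c p))"
  proof (rule sum_strict_mono_ex1[OF fin])
    show "\<forall>p\<in>Adj. 2 - rank (marks c' p) \<le> 2 - rank (marks c p)"
    proof
      fix p assume "p \<in> Adj"
      show "2 - rank (marks c' p) \<le> 2 - rank (marks c p)"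
      proof (cases "p = (u, v) \<or> p = (v, u)")
        case True then show ?thesis using F(1,2) mk' by auto
      next
        case False then show ?thesis using F(5)[of p] mk' by auto
      qed
    qed
    show "\<exists>p\<in>Adj. 2 - rank (marks c' p) < 2 - rank (marks c p)"
    proof
      have "rank (marks c' (u, v)) = Suc (rank (marks c (u, v)))" using F(1) mk' by simp
      then show "2 - rank (marks c' (u, v)) < 2 - rank (marks c (u, v))" using F(3) by simp
    qed (rule uv)
  qed
  then show ?thesis unfolding mu_def stc by simp
next
  case (halt i)
  have m: "marks c' = marks c" using halt(2) by simp
  have s': "stopped c' = (stopped c)(i := True)" using halt(2) by simp
  have "nst (stopped c') < nst (stopped c)" using s' nst_less[of "stopped c" i, OF halt(3)] by simp
  then show ?thesis unfolding mu_def m by simp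
qed



definition loginv :: "('v \<times> 'v) set \<Rightarrow> 'v config \<Rightarrow> ('v \<times> 'v) option list \<Rightarrow> bool" where
  "loginv Adj c L \<longleftrightarrow> set (traversals L) \<subseteq> Adj \<and>
     (\<forall>a b. (a, b) \<in> Adj \<longrightarrow> times_traversed L {a, b} = rank (marks c (a, b)))"

lemma traversals_snoc: "traversals (L @ [Some e]) = traversals L @ [e]" "traversals (L @ [None]) = traversals L"
  unfolding traversals_def by simp_all

lemma tt_snoc: "times_traversed (L @ [Some (u, v)]) e = times_traversed L e + (if {u, v} = e then 1 else 0)"
  "times_traversed (L @ [None]) e = times_traversed L e"
  unfolding times_traversed_def traversals_snoc by simp_all

lemma step_log:
  assumes I: "sinv Adj c r P" and sy: "sym Adj" and irr: "irrefl Adj"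
    and st: "step Adj c l c'" and LI: "loginv Adj c L"
  shows "loginv Adj c' (L @ [l])"
  using st
proof cases
  case (move i v)
  define u where "u = pos c i"
  have uv: "(u, v) \<in> Adj" using move u_def by simp
  have nD: "marks c (u, v) \<noteq> MD" using move am_notD u_def by metis
  note F = apply_row_facts[OF I sy irr uv nD]
  have mk': "marks c' = apply_row (marks c) (visited c) u v" using move u_def by simp
  have l: "l = Some (u, v)" using move u_def by simp
  show ?thesis unfolding loginv_def
  proof (intro conjI allI impI)
    show "set (traversals (L @ [l])) \<subseteq> Adj" using LI uv l unfolding loginv_def by (simp add: traversals_snoc)
    fix a b assume ab: "(a, b) \<in> Adj"
    have t: "times_traversed L {a, b} = rank (marks c (a, b))" using LI ab unfolding loginv_def by blast
    show "times_traversed (L @ [l]) {a, b} = rank (marks c' (a, b))"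
    proof (cases "{u, v} = {a, b}")
      case True
      then have "(a, b) = (u, v) \<or> (a, b) = (v, u)" by (auto simp: doubleton_eq_iff)
      then show ?thesis using t F mk' l True by (auto simp: tt_snoc)
    next
      case False
      then have "(a, b) \<noteq> (u, v)" "(a, b) \<noteq> (v, u)" by auto
      then show ?thesis using t F mk' l False by (auto simp: tt_snoc)
    qed
  qed
next
  case (halt i)
  then show ?thesis using LI unfolding loginv_def by (simp add: traversals_snoc tt_snoc)
qed

lemma step_vis: assumes "step Adj c l c'" shows "visited c \<subseteq> visited c'"
  using assms
proof cases
  case (move i v)
  have "visited c' = insert v (visited c)" using move(2) by simp
  then show ?thesis by blast
next
  case (halt i)
  have "visited c' = visited c" using halt(2) by simp
  then show ?thesis by blast
qed


lemma exec_inv: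
  assumes "exec Adj c ls c''" and "sinv Adj c r P" and "loginv Adj c L"
    and sy: "sym Adj" and irr: "irrefl Adj"
  shows "(\<exists>r P. sinv Adj c'' r P) \<and> loginv Adj c'' (L @ ls) \<and> visited c \<subseteq> visited c''"
  using assms(1-3)
proof (induction arbitrary: r P L rule: exec.induct)
  case (exec_nil c)
  then show ?case by auto
next
  case (exec_cons c l c' ls c'')
  obtain r' P' where I': "sinv Adj c' r' P'" using step_inv[OF exec_cons.prems(1) sy irr exec_cons.hyps(1)] by blast
  have L': "loginv Adj c' (L @ [l])" using step_log[OF exec_cons.prems(1) sy irr exec_cons.hyps(1) exec_cons.prems(2)] .
  have "(\<exists>r P. sinv Adj c'' r P) \<and> loginv Adj c'' ((L @ [l]) @ ls) \<and> visited c' \<subseteq> visited c''"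
    using exec_cons.IH[OF I' L'] .
  moreover have "visited c \<subseteq> visited c'" using step_vis[OF exec_cons.hyps(1)] .
  ultimately show ?case by (metis append_assoc append_Cons append_Nil order_trans)
qed




lemma len_sum:
  assumes "set xs \<subseteq> Adj" and "finite (uedges Adj)"
  shows "length xs = (\<Sum>e\<in>uedges Adj. length (filter (\<lambda>(u, v). {u, v} = e) xs))"
  using assms(1)
proof (induction xs)
  case Nil then show ?case by simp
next
  case (Cons x xs)
  obtain a b where x: "x = (a, b)" by fastforce
  have ab: "{a, b} \<in> uedges Adj" using Cons.prems x unfolding uedges_def by auto
  have "(\<Sum>e\<in>uedges Adj. length (filter (\<lambda>(u, v). {u, v} = e) (x # xs)))
      = (\<Sum>e\<in>uedges Adj. (if {a, b} = e then 1 else 0) + length (filter (\<lambda>(u, v). {u, v} = e) xs))"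
    using x by (intro sum.cong) auto
  also have "\<dots> = (\<Sum>e\<in>uedges Adj. (if {a, b} = e then 1 else 0)) + (\<Sum>e\<in>uedges Adj. length (filter (\<lambda>(u, v). {u, v} = e) xs))"
    by (rule sum.distrib)
  also have "(\<Sum>e\<in>uedges Adj. (if {a, b} = e then 1 else 0)) = (1::nat)"
    using sum.delta[OF assms(2), of "{a, b}" "\<lambda>_. 1::nat"] ab by (simp add: eq_commute)
  finally show ?case using Cons by simp
qed

lemma loginv_init: "loginv Adj (init_config s) []"
  unfolding loginv_def times_traversed_def traversals_def init_config_def by simp

theorem theorem4:
  fixes V :: "'v set" and Adj :: "('v \<times> 'v) set" and s :: 'v
  assumes "finite V"
    and "Adj \<subseteq> V \<times> V"
    and "sym Adj"
    and "irrefl Adj"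
    and "\<forall>x\<in>V. \<forall>y\<in>V. (x, y) \<in> Adj\<^sup>*"
    and "s \<in> V"
  shows "\<not> (\<exists>f. f 0 = init_config s \<and> (\<forall>n. \<exists>l. step Adj (f n) l (f (Suc n))))
       \<and> (\<forall>ls c. exec Adj (init_config s) ls c \<and> (\<forall>i. stopped c i) \<longrightarrow>
              length (traversals ls) = 2 * card (uedges Adj)
            \<and> (\<forall>e\<in>uedges Adj. times_traversed ls e = 2)
            \<and> pos c True = pos c False)"
proof
  have fin: "finite Adj" using assms(1,2) finite_subset by blast
  have sy: "sym Adj" and irr: "irrefl Adj" using assms(3,4) by auto
  show "\<not> (\<exists>f. f 0 = init_config s \<and> (\<forall>n. \<exists>l. step Adj (f n) l (f (Suc n))))"
  proof
    assume "\<exists>f. f 0 = init_config s \<and> (\<forall>n. \<exists>l. step Adj (f n) l (f (Suc n)))"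
    then obtain f where f0: "f 0 = init_config s" and fs: "\<And>n. \<exists>l. step Adj (f n) l (f (Suc n))" by blast
    have invs: "\<exists>r P. sinv Adj (f n) r P" for n
    proof (induction n)
      case 0 then show ?case using init_inv f0 by metis
    next
      case (Suc n)
      then obtain r P where I: "sinv Adj (f n) r P" by blast
      obtain l where st: "step Adj (f n) l (f (Suc n))" using fs by blast
      show ?case by (rule step_inv[OF I sy irr st])
    qed
    have dec: "mu Adj (f (Suc n)) < mu Adj (f n)" for n
    proof -
      obtain r P where I: "sinv Adj (f n) r P" using invs by blast
      obtain l where st: "step Adj (f n) l (f (Suc n))" using fs by blast
      show ?thesis by (rule step_mu[OF I sy irr fin st])
    qed
    have bnd: "mu Adj (f n) + n \<le> mu Adj (f 0)" for n
    proof (induction n)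
      case 0 then show ?case by simp
    next
      case (Suc n) then show ?case using dec[of n] by simp
    qed
    show False using bnd[of "Suc (mu Adj (f 0))"] by simp
  qed
  show "\<forall>ls c. exec Adj (init_config s) ls c \<and> (\<forall>i. stopped c i) \<longrightarrow>
              length (traversals ls) = 2 * card (uedges Adj)
            \<and> (\<forall>e\<in>uedges Adj. times_traversed ls e = 2)
            \<and> pos c True = pos c False"
  proof (intro allI impI, elim conjE)
    fix ls c assume ex: "exec Adj (init_config s) ls c" and sto: "\<forall>i. stopped c i"
    have E: "(\<exists>r P. sinv Adj c r P) \<and> loginv Adj c ([] @ ls) \<and> visited (init_config s) \<subseteq> visited c"
      using exec_inv[OF ex init_inv loginv_init sy irr] .
    then obtain r P where I: "sinv Adj c r P" by blast
    have LI: "loginv Adj c ls" using E by simp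
    have svis: "s \<in> visited c" using E by (auto simp: init_config_def)
    note J = invD[OF I]
    have allD: "\<And>k y. (pos c k, y) \<in> Adj \<Longrightarrow> marks c (pos c k, y) = MD"
      using J(16) sto am_None_iff by metis
    have Pe: "P k = []" for k
    proof (rule ccontr)
      assume ne: "P k \<noteq> []"
      define z where "z = last (r # butlast (P k))"
      have "last (eo r (P k)) = (z, pos c k)" using last_eo[OF ne] J(2) ne z_def by simp
      then have "(z, pos c k) \<in> set (eo r (P k))" using ne eo_Nil_iff last_in_set by metis
      then have "opn r P (z, pos c k)" unfolding opn_def by blast
      then have "(z, pos c k) \<in> Adj" "marks c (pos c k, z) \<in> {MF, MB}" using J(5) by auto
      moreover then have "(pos c k, z) \<in> Adj" using sy by (auto dest: symD)
      ultimately show False using allD by fastforce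
    qed
    have pr: "pos c k = r" for k using J(2) Pe by simp
    have noopn: "\<not> opn r P e" for e unfolding opn_def using Pe by simp
    have noU: "marks c (x, y) \<noteq> Unm" if "x \<in> visited c" "(x, y) \<in> Adj" for x y
    proof
      assume u: "marks c (x, y) = Unm"
      have "x = r \<or> (\<exists>z. (x, z) \<in> Adj \<and> marks c (x, z) = MF)" using J(13) that u by blast
      then show False
      proof
        assume "x = r"
        then show False using allD[of True y] pr[of True] that u by simp
      next
        assume "\<exists>z. (x, z) \<in> Adj \<and> marks c (x, z) = MF"
        then show False using J(7) noopn by auto
      qed
    qed
    have allvis: "x \<in> visited c" if "x \<in> V" for x
    proof -
      have "(s, x) \<in> Adj\<^sup>*" using assms(5,6) that by blast
      then show ?thesis
      proof (induction rule: rtrancl_induct)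
        case base then show ?case using svis .
      next
        case (step y z)
        then show ?case using noU J(14) by blast
      qed
    qed
    have allDD: "marks c (a, b) = MD" if "(a, b) \<in> Adj" for a b
    proof -
      have "a \<in> visited c" using allvis assms(2) that by blast
      then have "marks c (a, b) \<noteq> Unm" using noU that by blast
      moreover have "marks c (a, b) \<noteq> ME" using J(6) noopn that by blast
      moreover have "marks c (a, b) \<notin> {MF, MB}" using J(7) noopn that by blast
      ultimately show ?thesis by (cases "marks c (a, b)") auto
    qed
    have tt2: "times_traversed ls e = 2" if he: "e \<in> uedges Adj" for e
    proof -
      obtain a b where e: "e = {a, b}" and ab: "(a, b) \<in> Adj" using he unfolding uedges_def by blast
      then show ?thesis using LI allDD[OF ab] unfolding loginv_def by simp
    qed
    have finU: "finite (uedges Adj)"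
    proof (rule finite_subset[of _ "(\<lambda>(u, v). {u, v}) ` Adj"])
      show "uedges Adj \<subseteq> (\<lambda>(u, v). {u, v}) ` Adj" unfolding uedges_def by force
      show "finite ((\<lambda>(u, v). {u, v}) ` Adj)" using fin by simp
    qed
    have "length (traversals ls) = (\<Sum>e\<in>uedges Adj. times_traversed ls e)"
      using len_sum[of "traversals ls" Adj] LI finU unfolding loginv_def times_traversed_def by simp
    also have "\<dots> = (\<Sum>e\<in>uedges Adj. 2)" using tt2 by simp
    also have "\<dots> = 2 * card (uedges Adj)" by simp
    finally show "length (traversals ls) = 2 * card (uedges Adj)
            \<and> (\<forall>e\<in>uedges Adj. times_traversed ls e = 2)
            \<and> pos c True = pos c False" using tt2 pr by simp
  qed
qed


end
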